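(* For every $n\ge 1$, $|\mathcal{OCT}_n|=(n+1)2^{n-2}$.
   Context: $X_n=\{1,2,\dots,n\}$ with its usual order. A map $\alpha:X_n\to X_n$ is order-preserving if $x\le y$ implies $x\alpha\le y\alpha$, and a contraction if $|x\alpha-y\alpha|\le|x-y|$ for all $x,y$. $\mathcal{OCT}_n$ is the set (semigroup under composition) of all order-preserving contractions $X_n\to X_n$ defined on all of $X_n$. *)

theory Defs
  imports Complex_Main "HOL-Library.FuncSet"
begin

definition OCT :: "nat \<Rightarrow> (nat \<Rightarrow> nat) set" where
  "OCT n = {f \<in> {1..n} \<rightarrow>\<^sub>E {1..n}.
      (\<forall>x\<in>{1..n}. \<forall>y\<in>{1..n}. x \<le> y \<longrightarrow> f x \<le> f y) \<and>
      (\<forall>x\<in>{1..n}. \<forall>y\<in>{1..n}. \<bar>int (f x) - int (f y)\<bar> \<le> \<bar>int x - int y\<bar>)}"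

end

theory Submission
  imports Defs
begin

lemma sum_card_Pow:
  assumes "finite A"
  shows "2 * (\<Sum>D\<in>Pow A. card D) = card A * 2 ^ card A"
  using assms
proof (induction A rule: finite_induct)
  case empty
  then show ?case by simp
next
  case (insert x A)
  have disj: "Pow A \<inter> insert x ` Pow A = {}" using insert by auto
  have inj: "inj_on (insert x) (Pow A)"
  proof (rule inj_onI)
    fix X Y assume "X \<in> Pow A" "Y \<in> Pow A" "insert x X = insert x Y"
    moreover have "x \<notin> X" "x \<notin> Y" using insert \<open>X \<in> Pow A\<close> \<open>Y \<in> Pow A\<close> by auto
    ultimately show "X = Y" by (metis Diff_insert_absorb)
  qed
  have "(\<Sum>D\<in>Pow (insert x A). card D) = (\<Sum>D\<in>Pow A. card D) + (\<Sum>D\<in>insert x ` Pow A. card D)"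
    unfolding Pow_insert using insert disj by (simp add: sum.union_disjoint)
  also have "(\<Sum>D\<in>insert x ` Pow A. card D) = (\<Sum>D\<in>Pow A. card (insert x D))"
    using inj by (simp add: sum.reindex)
  also have "\<dots> = (\<Sum>D\<in>Pow A. card D + 1)"
  proof (rule sum.cong)
    fix D assume "D \<in> Pow A"
    hence "finite D" "x \<notin> D" using insert finite_subset by auto
    thus "card (insert x D) = card D + 1" by simp
  qed simp
  also have "\<dots> = (\<Sum>D\<in>Pow A. card D) + 2 ^ card A"
    unfolding sum.distrib using insert by (simp add: card_Pow)
  finally show ?case using insert by (simp add: algebra_simps)
qed

lemma cnt_Suc:
  "card {j\<in>D. j < Suc i} = card {j\<in>D. j < i} + (if i \<in> D then 1 else 0)"
proof -
  have fin: "finite {j\<in>D. j < i}" by (rule finite_subset[of _ "{..<i}"]) auto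
  show ?thesis
  proof (cases "i \<in> D")
    case True
    have "{j\<in>D. j < Suc i} = insert i {j\<in>D. j < i}" using True by auto
    then show ?thesis using fin True by simp
  next
    case False
    have "{j\<in>D. j < Suc i} = {j\<in>D. j < i}" using False by (auto simp: less_Suc_eq)
    then show ?thesis using False by simp
  qed
qed

lemma cnt_mono: "x \<le> (y::nat) \<Longrightarrow> card {j\<in>D. j < x} \<le> card {j\<in>D. j < y}"
proof (rule card_mono)
  show "finite {j\<in>D. j < y}" by (rule finite_subset[of _ "{..<y}"]) auto
qed auto

lemma cnt_diff: "x \<le> (y::nat) \<Longrightarrow> card {j\<in>D. j < y} \<le> card {j\<in>D. j < x} + (y - x)"
proof (induction y rule: dec_induct)
  case base
  then show ?case by simp
next
  case (step y)
  then show ?case using cnt_Suc[of D y] by auto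
qed

definition TT :: "nat \<Rightarrow> (nat set \<times> nat) set" where
  "TT n = (SIGMA D:Pow {1..<n}. {1..n - card D})"

definition psi :: "nat \<Rightarrow> nat set \<times> nat \<Rightarrow> nat \<Rightarrow> nat" where
  "psi n p = (\<lambda>i. if i \<in> {1..n} then snd p + card {j\<in>fst p. j < i} else undefined)"

lemma card_TT: "card (TT n) = (\<Sum>D\<in>Pow {1..<n}. n - card D)"
  unfolding TT_def by (subst card_SigmaI) (auto)

lemma cardD_le: "D \<subseteq> {1..<n::nat} \<Longrightarrow> card D \<le> n - 1"
  using card_mono[of "{1..<n}" D] by simp

lemma cnt_le_card: "D \<subseteq> {1..<n::nat} \<Longrightarrow> card {j\<in>D. j < i} \<le> card D"
  by (rule card_mono) (auto intro: finite_subset[OF _ finite_atLeastLessThan])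

lemma psi_in: assumes "p \<in> TT n" shows "psi n p \<in> OCT n"
proof -
  obtain D a where p: "p = (D, a)" and D: "D \<subseteq> {1..<n}" and a: "1 \<le> a" "a \<le> n - card D"
    using assms unfolding TT_def by auto
  have cd: "card D \<le> n - 1" using cardD_le[OF D] .
  have mono: "\<forall>x\<in>{1..n}. \<forall>y\<in>{1..n}. x \<le> y \<longrightarrow> psi n p x \<le> psi n p y"
    unfolding psi_def p using cnt_mono by auto
  have con1: "\<bar>int (psi n p x) - int (psi n p y)\<bar> \<le> \<bar>int x - int y\<bar>"
    if "x \<in> {1..n}" "y \<in> {1..n}" "x \<le> y" for x y
    using that cnt_diff[OF \<open>x \<le> y\<close>, of D] cnt_mono[OF \<open>x \<le> y\<close>, of D]
    unfolding psi_def p by auto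
  have con: "\<forall>x\<in>{1..n}. \<forall>y\<in>{1..n}. \<bar>int (psi n p x) - int (psi n p y)\<bar> \<le> \<bar>int x - int y\<bar>"
  proof (intro ballI)
    fix x y assume "x \<in> {1..n}" "y \<in> {1..n}"
    then show "\<bar>int (psi n p x) - int (psi n p y)\<bar> \<le> \<bar>int x - int y\<bar>"
      using con1[of x y] con1[of y x] by (cases "x \<le> y") (auto simp: abs_minus_commute)
  qed
  have "a + card D \<le> n" using a cd by simp
  hence "a + card {j\<in>D. j < x} \<le> n" for x using cnt_le_card[OF D, of x] by simp
  hence range: "psi n p \<in> {1..n} \<rightarrow>\<^sub>E {1..n}"
    unfolding psi_def p using a by (auto simp: PiE_def extensional_def)
  show ?thesis unfolding OCT_def using mono con range by blast
qed

lemma psi_inj: "inj_on (psi n) (TT n)"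
proof (rule inj_onI)
  fix p q assume p: "p \<in> TT n" and q: "q \<in> TT n" and e: "psi n p = psi n q"
  obtain D a where pp: "p = (D, a)" and D: "D \<subseteq> {1..<n}" and a: "1 \<le> a"
    using p unfolding TT_def by auto
  obtain E b where qq: "q = (E, b)" and E: "E \<subseteq> {1..<n}" and b: "1 \<le> b"
    using q unfolding TT_def by auto
  have n1: "1 \<le> n" using a p unfolding TT_def pp by auto
  have "{j\<in>D. j < 1} = {}" "{j\<in>E. j < 1} = {}" using D E by auto
  hence "psi n p 1 = a" "psi n q 1 = b" unfolding psi_def pp qq using n1 by simp_all
  hence ab: "a = b" using e by simp
  have "j \<in> D \<longleftrightarrow> j \<in> E" for j
  proof (cases "j \<in> {1..<n}")
    case True
    have 1: "psi n p (Suc j) = psi n p j + (if j \<in> D then 1 else 0)"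
      using True cnt_Suc[of D j] by (simp add: psi_def pp)
    have 2: "psi n q (Suc j) = psi n q j + (if j \<in> E then 1 else 0)"
      using True cnt_Suc[of E j] by (simp add: psi_def qq)
    have "(if j \<in> D then 1 else 0) = (if j \<in> E then (1::nat) else 0)"
      using 1 2 e by simp
    then show ?thesis by (simp split: if_splits)
  next
    case False
    then show ?thesis using D E by auto
  qed
  hence "D = E" by auto
  then show "p = q" using pp qq ab by simp
qed

lemma OCT_repr:
  assumes f: "f \<in> OCT n" and i: "1 \<le> k" "k \<le> n"
  shows "f k = f 1 + card {j\<in>{j\<in>{1..<n}. f (Suc j) \<noteq> f j}. j < k}"
  using i(1)
proof (induction k rule: dec_induct)
  case base
  have "{j\<in>{j\<in>{1..<n}. f (Suc j) \<noteq> f j}. j < 1} = {}" by auto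
  then show ?case by simp
next
  case (step i)
  let ?D = "{j\<in>{1..<n}. f (Suc j) \<noteq> f j}"
  have "Suc i \<le> n" using step.hyps i(2) by simp
  note step = step this
  have mono': "\<forall>x\<in>{1..n}. \<forall>y\<in>{1..n}. x \<le> y \<longrightarrow> f x \<le> f y"
    and con': "\<forall>x\<in>{1..n}. \<forall>y\<in>{1..n}. \<bar>int (f x) - int (f y)\<bar> \<le> \<bar>int x - int y\<bar>"
    using f unfolding OCT_def by blast+
  have m: "f i \<le> f (Suc i)" using mono'[rule_format, of i "Suc i"] step by simp
  have c: "\<bar>int (f (Suc i)) - int (f i)\<bar> \<le> \<bar>int (Suc i) - int i\<bar>"
    using con'[rule_format, of "Suc i" i] step by simp
  have "f (Suc i) = f i + (if i \<in> ?D then 1 else 0)" using m c step by auto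
  then show ?case using step cnt_Suc[of ?D i] by simp
qed

lemma psi_surj: assumes f: "f \<in> OCT n" and n1: "n \<ge> 1" shows "f \<in> psi n ` TT n"
proof -
  have False: "n \<noteq> 0" using n1 by simp
  let ?D = "{j\<in>{1..<n}. f (Suc j) \<noteq> f j}"
  have f1: "1 \<le> f 1" using f False unfolding OCT_def by auto
  have fn: "f n = f 1 + card ?D"
  proof -
    have "{j\<in>?D. j < n} = ?D" by auto
    thus ?thesis using OCT_repr[OF f, of n] False by simp
  qed
  have "f n \<le> n" using f False unfolding OCT_def by auto
  hence T: "(?D, f 1) \<in> TT n" unfolding TT_def using f1 fn by auto
  have "f = psi n (?D, f 1)"
  proof
    fix i show "f i = psi n (?D, f 1) i"
    proof (cases "i \<in> {1..n}")
      case True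
      have "f i = f 1 + card {j\<in>?D. j < i}" using OCT_repr[OF f, of i] True by simp
      then show ?thesis using True by (simp add: psi_def)
    next
      case False
      have "f \<in> {1..n} \<rightarrow>\<^sub>E {1..n}" using f unfolding OCT_def by blast
      hence "f i = undefined" using False by (rule PiE_arb)
      moreover have "psi n (?D, f 1) i = undefined"
        using False by (simp add: psi_def del: atLeastAtMost_iff)
      ultimately show ?thesis by simp
    qed
  qed
  then show ?thesis using T by (rule image_eqI)
qed

lemma card_OCT: "n \<ge> 1 \<Longrightarrow> card (OCT n) = (\<Sum>D\<in>Pow {1..<n}. n - card D)"
proof -
  assume "n \<ge> 1"
  hence "psi n ` TT n = OCT n"
  proof (intro equalityI subsetI)
    fix g assume "g \<in> psi n ` TT n" thus "g \<in> OCT n" using psi_in by auto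
  next
    fix g assume "g \<in> OCT n" thus "g \<in> psi n ` TT n" using psi_surj \<open>n \<ge> 1\<close> by simp
  qed
  hence "card (OCT n) = card (TT n)" using card_image[OF psi_inj] by metis
  thus ?thesis using card_TT by simp
qed

theorem corollary2p10:
  fixes n :: nat
  assumes "n \<ge> 1"
  shows "real (card (OCT n)) = (real n + 1) * 2 powr (real n - 2)"
proof -
  obtain m where m: "n = Suc m" using assms by (cases n) auto
  have cA: "card {1..<n} = m" using m by simp
  have "(\<Sum>D\<in>Pow {1..<n}. n - card D) + (\<Sum>D\<in>Pow {1..<n}. card D)
        = (\<Sum>D\<in>Pow {1..<n}. n)"
    unfolding sum.distrib[symmetric]
  proof (rule sum.cong)
    fix D assume "D \<in> Pow {1..<n}"
    hence "card D \<le> n - 1" using cardD_le by blast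
    thus "n - card D + card D = n" using assms by simp
  qed simp
  also have "\<dots> = n * 2 ^ m" using cA by (simp add: card_Pow)
  finally have eq: "card (OCT n) + (\<Sum>D\<in>Pow {1..<n}. card D) = n * 2 ^ m"
    using card_OCT assms by simp
  have s: "2 * (\<Sum>D\<in>Pow {1..<n}. card D) = m * 2 ^ m" using sum_card_Pow[of "{1..<n}"] cA by simp
  have "2 * real (card (OCT n)) = 2 * real n * 2 ^ m - real m * 2 ^ m"
    using arg_cong[OF eq, of real] arg_cong[OF s, of real] by (simp add: algebra_simps)
  hence h1: "2 * real (card (OCT n)) = (real n + 1) * 2 ^ m" using m by (simp add: algebra_simps)
  have h2: "2 powr (real n - 2) = 2 ^ m / 2"
  proof -
    have "2 powr (real n - 2) = 2 powr (real m - 1)" using m by simp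
    also have "\<dots> = 2 powr real m / 2 powr 1" by (rule powr_diff)
    also have "\<dots> = 2 ^ m / 2" by (simp add: powr_realpow)
    finally show ?thesis .
  qed
  show ?thesis unfolding h2 using h1 by simp
qed

end
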